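(* Let $\theta\in(-\pi/2,\pi/2)$ and $y>0$ be real. For real $\alpha>0$ define $$f(\alpha)=\prod_{n=0}^\infty\left(\frac{\cosh\left(\pi\cos\theta\sqrt{\left(n+\frac12\right)^2\alpha^2+\alpha y^2}\right)-\sin\left(\pi\left(n+\frac12\right)\alpha\sin\theta\right)}{\cosh\left(\pi\cos\theta\sqrt{\left(n+\frac12\right)^2\alpha^2+\alpha y^2}\right)+\sin\left(\pi\left(n+\frac12\right)\alpha\sin\theta\right)}\right)^{(-1)^n}.$$ Then $f(\alpha)=f(1/\alpha)$ for every $\alpha>0$. *)

theory Defs
  imports "HOL-Analysis.Analysis"
begin

definition fac :: "real \<Rightarrow> real \<Rightarrow> real \<Rightarrow> nat \<Rightarrow> real" where
  "fac \<theta> y \<alpha> n =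
     (let C = cosh (pi * cos \<theta> * sqrt ((real n + 1/2)^2 * \<alpha>^2 + \<alpha> * y^2));
          S = sin (pi * (real n + 1/2) * \<alpha> * sin \<theta>)
      in ((C - S) / (C + S)) powi ((-1) ^ n))"

definition f_prod :: "real \<Rightarrow> real \<Rightarrow> real \<Rightarrow> real" where
  "f_prod \<theta> y \<alpha> = (\<Prod>n. fac \<theta> y \<alpha> n)"

end

theory Submission
  imports Defs
begin


lemma Digamma_refl:
  fixes z :: complex
  assumes z: "z \<notin> \<int>"
  shows "Digamma z - Digamma (1 - z) = - (of_real pi * cot (of_real pi * z))"
proof -
  have z1: "z \<notin> \<int>\<^sub>\<le>\<^sub>0" using z nonpos_Ints_subset_Ints by blast
  have z2': "1 - z \<notin> \<int>" using z Ints_diff[of 1 "1 - z"] by auto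
  have z2: "1 - z \<notin> \<int>\<^sub>\<le>\<^sub>0" using z2' nonpos_Ints_subset_Ints by blast
  have sn: "sin (of_real pi * z) \<noteq> 0" using z by (subst sin_eq_0) auto
  have d1: "((\<lambda>z. Gamma z * Gamma (1 - z)) has_field_derivative
      (Gamma z * Digamma z * Gamma (1 - z) - Gamma z * (Gamma (1 - z) * Digamma (1 - z)))) (at z)"
    using z1 z2 by (auto intro!: derivative_eq_intros)
  have d2: "((\<lambda>z. of_real pi / sin (of_real pi * z)) has_field_derivative
      (- (of_real pi * (cos (of_real pi * z) * of_real pi)) / (sin (of_real pi * z))^2)) (at z)"
    using sn by (auto intro!: derivative_eq_intros simp: power2_eq_square)
  have eq: "(\<lambda>z::complex. Gamma z * Gamma (1 - z)) = (\<lambda>z. of_real pi / sin (of_real pi * z))"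
    using Gamma_reflection_complex by auto
  have "Gamma z * Digamma z * Gamma (1 - z) - Gamma z * (Gamma (1 - z) * Digamma (1 - z)) =
      (- (of_real pi * (cos (of_real pi * z) * of_real pi)) / (sin (of_real pi * z))^2)"
    using DERIV_unique[OF d1 d2[folded eq]] .
  hence "(Gamma z * Gamma (1 - z)) * (Digamma z - Digamma (1 - z)) =
      (- (of_real pi * (cos (of_real pi * z) * of_real pi)) / (sin (of_real pi * z))^2)"
    by (simp add: algebra_simps)
  hence "(of_real pi / sin (of_real pi * z)) * (Digamma z - Digamma (1 - z)) =
      (- (of_real pi * (cos (of_real pi * z) * of_real pi)) / (sin (of_real pi * z))^2)"
    using Gamma_reflection_complex by simp
  hence "(of_real pi * sin (of_real pi * z)) * (of_real pi * cos (of_real pi * z) + (Digamma z - Digamma (1 - z)) * sin (of_real pi * z)) = 0"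
    using sn by (simp add: field_simps power2_eq_square)
  hence "of_real pi * cos (of_real pi * z) + (Digamma z - Digamma (1 - z)) * sin (of_real pi * z) = 0"
    using sn by simp
  thus ?thesis using sn by (simp add: cot_def field_simps)
qed




lemma Digamma_refl_sums:
  fixes z :: complex
  assumes z: "z \<notin> \<int>"
  shows "(\<lambda>k. inverse (1 - z + of_nat k) - inverse (z + of_nat k)) sums (- (of_real pi * cot (of_real pi * z)))"
proof -
  have z0: "z \<noteq> 0" using z by auto
  have z1: "1 - z \<noteq> 0" using z by auto
  have s1: "(\<lambda>k. inverse (of_nat (Suc k)) - inverse (z + of_nat k)) sums (Digamma z + euler_mascheroni)"
    using summable_Digamma[OF z0] by (simp add: Digamma_def summable_sums)
  have s2: "(\<lambda>k. inverse (of_nat (Suc k)) - inverse ((1 - z) + of_nat k)) sums (Digamma (1 - z) + euler_mascheroni)"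
    using summable_Digamma[OF z1] by (simp add: Digamma_def summable_sums)
  have "(\<lambda>k. (inverse (of_nat (Suc k)) - inverse (z + of_nat k)) - (inverse (of_nat (Suc k)) - inverse ((1 - z) + of_nat k)))
     sums ((Digamma z + euler_mascheroni) - (Digamma (1 - z) + euler_mascheroni))"
    by (rule sums_diff[OF s1 s2])
  thus ?thesis using Digamma_refl[OF z] by simp
qed

lemma Im_cot_complex:
  fixes a b :: real
  shows "Im (cot (Complex a b)) = - sinh (2*b) / (cosh (2*b) - cos (2*a))"
proof -
  define P where "P = (exp b + exp (-b))/2"
  define Q where "Q = (exp b - exp (-b))/2"
  have e1: "exp (2*b) = exp b * exp b" "exp (-(2*b)) = exp (-b) * exp (-b)" "exp b * exp (-b) = 1"
    by (simp_all flip: exp_add)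
  have PQ: "P^2 - Q^2 = 1" unfolding P_def Q_def
    using e1(3) by (simp add: power2_eq_square field_simps)
  have sh: "sinh (2*b) = 2*P*Q" unfolding P_def Q_def sinh_def e1(1,2)
    using e1(3) by (simp add: power2_eq_square field_simps)
  have ch: "cosh (2*b) = P^2 + Q^2" unfolding P_def Q_def cosh_def e1(1,2)
    using e1(3) by (simp add: power2_eq_square field_simps)
  have cw: "cos (2*a) = (cos a)^2 - (sin a)^2" by (simp add: cos_double)
  have sc: "(sin a)^2 + (cos a)^2 = 1" by simp
  have "Im (cot (Complex a b)) = ((- sin a * Q) * (sin a * P) - (cos a * P) * (cos a * Q)) /
      ((sin a * P)^2 + (cos a * Q)^2)"
    unfolding cot_def Im_divide Re_sin Im_sin Re_cos Im_cos P_def Q_def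
    by (simp add: algebra_simps)
  also have "\<dots> = - (P * Q) / ((sin a)^2 + Q^2)"
  proof -
    have "(- sin a * Q) * (sin a * P) - (cos a * P) * (cos a * Q) = - (P*Q) * ((sin a)^2 + (cos a)^2)"
      by (simp only: power2_eq_square) algebra
    moreover have "(sin a * P)^2 + (cos a * Q)^2 = (sin a)^2 * P^2 + (cos a)^2 * Q^2"
      by (simp add: power_mult_distrib)
    moreover have "(sin a)^2 * P^2 + (cos a)^2 * Q^2 = (sin a)^2 + Q^2"
      using PQ sc by (simp add: algebra_simps) (metis add.commute add_diff_cancel_left' mult.commute mult_1 distrib_left sc PQ)
    ultimately show ?thesis unfolding sc by simp
  qed
  also have "\<dots> = - sinh (2*b) / (cosh (2*b) - cos (2*a))"
  proof -
    have "cosh (2*b) - cos (2*a) = 2 * ((sin a)^2 + Q^2)"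
      using PQ sc unfolding ch cw by (simp add: algebra_simps)
    moreover have "- (2 * P * Q) / (2 * ((sin a)^2 + Q^2)) = - (P * Q) / ((sin a)^2 + Q^2)"
    proof -
      have gen: "\<And>x y::real. -(2*x)/(2*y) = -x/y" by simp
      show ?thesis using gen[of "P*Q" "(sin a)^2+Q^2"] by (simp only: mult.assoc)
    qed
    ultimately show ?thesis unfolding sh by simp
  qed
  finally show ?thesis .
qed




lemma pf_real:
  fixes u w :: real
  assumes u: "u > 0"
  shows "(\<lambda>k. 2*u/((w + 2*pi*real k)^2 + u^2) + 2*u/((2*pi*(real k+1) - w)^2 + u^2))
           sums (sinh u / (cosh u - cos w))"
proof -
  define z where "z = Complex (w/(2*pi)) (u/(2*pi))"
  have zI: "z \<notin> \<int>"
  proof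
    assume "z \<in> \<int>"
    then obtain n where "z = of_int n" by (auto elim: Ints_cases)
    hence "Im z = 0" by simp
    thus False using u by (simp add: z_def)
  qed
  have pz: "of_real pi * z = Complex (w/2) (u/2)"
    by (simp add: z_def complex_eq_iff)
  from sums_Im[OF Digamma_refl_sums[OF zI]]
  have s: "(\<lambda>k. Im (inverse (1 - z + of_nat k) - inverse (z + of_nat k))) sums
      (pi * (sinh u / (cosh u - cos w)))"
    unfolding pz using Im_cot_complex[of "w/2" "u/2"] by simp
  have eq: "Im (inverse (1 - z + of_nat k) - inverse (z + of_nat k)) =
      pi * (2*u/((w + 2*pi*real k)^2 + u^2) + 2*u/((2*pi*(real k+1) - w)^2 + u^2))" for k
  proof -
    have d1: "(w + 2*pi*real k)^2 + u^2 > 0" using u by (simp add: add_nonneg_pos)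
    have d2: "(2*pi*(real k+1) - w)^2 + u^2 > 0" using u by (simp add: add_nonneg_pos)
    have "Im (inverse (1 - z + of_nat k)) = (u/(2*pi)) / ((1 - w/(2*pi) + real k)^2 + (u/(2*pi))^2)"
      by (simp add: z_def Im_inverse)
    also have "\<dots> = pi * (2*u/((2*pi*(real k+1) - w)^2 + u^2))"
      using d2 by (simp add: field_simps power2_eq_square)
    finally have 1: "Im (inverse (1 - z + of_nat k)) = pi * (2*u/((2*pi*(real k+1) - w)^2 + u^2))" .
    have "Im (inverse (z + of_nat k)) = - (u/(2*pi)) / ((w/(2*pi) + real k)^2 + (u/(2*pi))^2)"
      by (simp add: z_def Im_inverse)
    also have "\<dots> = - (pi * (2*u/((w + 2*pi*real k)^2 + u^2)))"
      using d1 by (simp add: field_simps power2_eq_square)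
    finally have 2: "Im (inverse (z + of_nat k)) = - (pi * (2*u/((w + 2*pi*real k)^2 + u^2)))" .
    show ?thesis using 1 2 by (simp add: algebra_simps)
  qed
  have "(\<lambda>k. (1/pi) * Im (inverse (1 - z + of_nat k) - inverse (z + of_nat k))) sums
      ((1/pi) * (pi * (sinh u / (cosh u - cos w))))"
    by (rule sums_mult[OF s])
  thus ?thesis unfolding eq by simp
qed




definition hv :: "nat \<Rightarrow> real" where "hv n = real n + 1/2"

lemma hv_pos: "hv n > 0" and hv_ge: "hv n \<ge> 1/2"
  by (simp_all add: hv_def)

lemma summable_hv2: "summable (\<lambda>m. 1/(hv m)^2)"
proof (rule summable_comparison_test')
  have "summable (\<lambda>n. inverse (real (Suc n) ^ 2))"
    using inverse_power_summable[of 2, where 'a=real] by (subst summable_Suc_iff) simp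
  thus "summable (\<lambda>n. 4 * inverse (real (Suc n) ^ 2))" by (rule summable_mult)
  fix n
  have "real (Suc n) \<le> 2 * hv n" by (simp add: hv_def)
  hence "(real (Suc n))^2 \<le> (2 * hv n)^2" by (intro power_mono) auto
  hence "4/(2 * hv n)^2 \<le> 4 / (real (Suc n))^2"
    using hv_pos[of n] by (intro divide_left_mono) auto
  moreover have "4/(2 * hv n)^2 = 1/(hv n)^2" by (simp add: power2_eq_square)
  ultimately have "1/(hv n)^2 \<le> 4 / (real (Suc n))^2" by simp
  thus "norm (1/(hv n)^2) \<le> 4 * inverse (real (Suc n) ^ 2)" by (simp add: field_simps)
qed

locale L =
  fixes a s c :: real
  assumes a: "a > 0" and c: "c > 0" and sc: "s^2 + c^2 = 1"
begin

definition kap where "kap = 1 - \<bar>s\<bar>"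

lemma abs_s: "\<bar>s\<bar> < 1"
proof -
  have "s^2 < 1" using sc c by (simp add: power2_eq_square) (smt (verit) mult_pos_pos)
  thus ?thesis by (simp add: abs_square_less_1)
qed

lemma kap_pos: "kap > 0" using abs_s by (simp add: kap_def)

definition PP :: "real \<Rightarrow> real \<Rightarrow> real \<Rightarrow> real \<Rightarrow> real" where
  "PP \<sigma> t N M = N^2*a + 2* \<sigma>*N*M* s + M^2/a + c^2*t"

lemma PP_lower_gen:
  assumes "\<bar>\<sigma>\<bar> = 1" "t \<ge> 0"
  shows "kap * (N^2*a + M^2/a) \<le> PP \<sigma> t N M"
proof -
  have q: "2 * \<bar>N*M\<bar> \<le> N^2*a + M^2/a"
  proof -
    have "0 \<le> (\<bar>N\<bar>*a - \<bar>M\<bar>)^2 / a" using a by simp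
    also have "(\<bar>N\<bar>*a - \<bar>M\<bar>)^2 / a = N^2*a + M^2/a - 2 * \<bar>N*M\<bar>"
      using a by (simp add: power2_eq_square field_simps abs_mult)
    finally show ?thesis by simp
  qed
  have "\<bar>2* \<sigma>*N*M* s\<bar> = 2*\<bar>N*M\<bar>*\<bar>s\<bar>" using assms(1) by (simp add: abs_mult)
  also have "\<dots> \<le> (N^2*a + M^2/a) * \<bar>s\<bar>" using q by (intro mult_right_mono) auto
  finally have "\<bar>2* \<sigma>*N*M* s\<bar> \<le> (N^2*a + M^2/a) * \<bar>s\<bar>" .
  moreover have "c^2 * t \<ge> 0" using assms(2) by simp
  moreover have "kap*(N^2*a+M^2/a) = (N^2*a+M^2/a) - (N^2*a + M^2/a)*\<bar>s\<bar>"
    using a by (simp add: kap_def algebra_simps add_divide_distrib[symmetric])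
  moreover have "- \<bar>2*\<sigma>*N*M * s\<bar> \<le> 2*\<sigma>*N*M * s" by simp
  ultimately show ?thesis unfolding PP_def by linarith
qed

lemma PP_lower1:
  assumes "\<bar>\<sigma>\<bar> = 1" "t \<ge> 0" "N > 0" "M > 0"
  shows "2*kap*N*M \<le> PP \<sigma> t N M"
proof -
  have q: "2 * (N*M) \<le> N^2*a + M^2/a"
  proof -
    have "0 \<le> (N*a - M)^2 / a" using a by simp
    also have "(N*a - M)^2 / a = N^2*a + M^2/a - 2 * (N*M)"
      using a by (simp add: power2_eq_square field_simps)
    finally show ?thesis by simp
  qed
  have "2*kap*N*M = kap * (2*(N*M))" by simp
  also have "\<dots> \<le> kap * (N^2*a + M^2/a)" using q kap_pos by (intro mult_left_mono) auto
  also have "\<dots> \<le> PP \<sigma> t N M" by (rule PP_lower_gen[OF assms(1,2)])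
  finally show ?thesis .
qed

lemma PP_lower2:
  assumes "\<bar>\<sigma>\<bar> = 1" "t \<ge> 0"
  shows "kap * M^2 / a \<le> PP \<sigma> t N M"
proof -
  have "kap * M^2 / a \<le> kap * (N^2*a + M^2/a)" using kap_pos a
    by (simp add: field_simps)
  also have "\<dots> \<le> PP \<sigma> t N M" by (rule PP_lower_gen[OF assms])
  finally show ?thesis .
qed

lemma PP_pos:
  assumes "\<bar>\<sigma>\<bar> = 1" "t \<ge> 0" "N > 0" "M > 0"
  shows "PP \<sigma> t N M > 0"
  using PP_lower1[OF assms] kap_pos assms(3,4) by (smt (verit) mult_pos_pos)

lemma inv_PP_bound:
  assumes "\<bar>\<sigma>\<bar> = 1" "t \<ge> 0" "N > 0" "M > 0"
  shows "1 / PP \<sigma> t N M \<le> (a/kap) * (1/M^2)"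
proof -
  have p: "kap * M^2 / a > 0" using kap_pos a assms by simp
  have "1 / PP \<sigma> t N M \<le> 1 / (kap * M^2 / a)"
    using PP_lower2[OF assms(1,2), of M N] p by (intro frac_le) auto
  thus ?thesis by (simp add: field_simps)
qed

lemma inv_PP2_bound:
  assumes "\<bar>\<sigma>\<bar> = 1" "t \<ge> 0" "N > 0" "M > 0"
  shows "1 / (PP \<sigma> t N M)^2 \<le> (1/(4*kap^2)) * (1/N^2) * (1/M^2)"
proof -
  have p: "2*kap*N*M > 0" using kap_pos assms by simp
  have "(2*kap*N*M)^2 \<le> (PP \<sigma> t N M)^2"
    using PP_lower1[OF assms] p by (intro power_mono) auto
  hence "1 / (PP \<sigma> t N M)^2 \<le> 1 / (2*kap*N*M)^2"
    using p by (intro frac_le) auto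
  thus ?thesis by (simp add: field_simps power2_eq_square)
qed

end



lemma sinh_ge_self: "x \<ge> 0 \<Longrightarrow> x \<le> sinh (x::real)"
proof -
  assume x: "x \<ge> 0"
  have "(\<lambda>x. sinh x - x) 0 \<le> (\<lambda>x. sinh x - x) x"
  proof (rule DERIV_nonneg_imp_nondecreasing[OF x])
    fix y :: real assume "0 \<le> y" "y \<le> x"
    show "\<exists>d. ((\<lambda>x. sinh x - x) has_real_derivative d) (at y) \<and> 0 \<le> d"
      by (rule exI[of _ "cosh y - 1"]) (auto intro!: derivative_eq_intros simp: cosh_real_ge_1)
  qed
  thus ?thesis by simp
qed

lemma cosh_ge_quad: "1 + x^2/2 \<le> cosh (x::real)"
proof -
  have *: "1 + x^2/2 \<le> cosh x" if x: "x \<ge> 0" for x :: real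
  proof -
    have "(\<lambda>x. cosh x - 1 - x^2/2) 0 \<le> (\<lambda>x. cosh x - 1 - x^2/2) x"
    proof (rule DERIV_nonneg_imp_nondecreasing[OF x])
      fix y :: real assume "0 \<le> y" "y \<le> x"
      thus "\<exists>d. ((\<lambda>x. cosh x - 1 - x^2/2) has_real_derivative d) (at y) \<and> 0 \<le> d"
        by (intro exI[of _ "sinh y - y"]) (auto intro!: derivative_eq_intros simp: sinh_ge_self)
    qed
    thus ?thesis by simp
  qed
  show ?thesis
  proof (cases "x \<ge> 0")
    case True thus ?thesis by (rule *)
  next
    case False
    hence "1 + (-x)^2/2 \<le> cosh (-x)" by (intro *) auto
    thus ?thesis by simp
  qed
qed

context L begin

definition U :: "real \<Rightarrow> real \<Rightarrow> real" where
  "U N t = pi * c * sqrt (N^2 * a^2 + a * t)"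
definition S :: "real \<Rightarrow> real" where
  "S N = sin (pi * N * a * s)"
definition ell :: "real \<Rightarrow> real \<Rightarrow> real" where
  "ell N t = ln (cosh (U N t) - S N) - ln (cosh (U N t) + S N)"
definition ell1 :: "real \<Rightarrow> real \<Rightarrow> real" where
  "ell1 N t = (pi * c * a / (2 * sqrt (N^2 * a^2 + a * t))) * sinh (U N t) *
      (1 / (cosh (U N t) - S N) - 1 / (cosh (U N t) + S N))"

lemma U_lower:
  assumes "N > 0" "t \<ge> 0"
  shows "pi * c * a * N \<le> U N t"
proof -
  have "a * N \<le> sqrt (N^2 * a^2 + a * t)"
    using assms a by (intro real_le_rsqrt) (simp add: power_mult_distrib)
  hence "(pi * c) * (a * N) \<le> (pi * c) * sqrt (N^2 * a^2 + a * t)"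
    using c by (intro mult_left_mono) auto
  thus ?thesis unfolding U_def by (simp add: mult.assoc)
qed

lemma U_pos: "N > 0 \<Longrightarrow> t \<ge> 0 \<Longrightarrow> U N t > 0"
  using U_lower[of N t] a c by (smt (verit) mult_pos_pos pi_gt_zero)

lemma U_sq: "t \<ge> 0 \<Longrightarrow> (U N t)^2 = pi^2 * c^2 * (N^2 * a^2 + a * t)"
  unfolding U_def using a by (simp add: power_mult_distrib add_nonneg_nonneg)

lemma S_abs: "\<bar>S N\<bar> \<le> 1" by (simp add: S_def)

lemma cosh_U_gt:
  assumes "N > 0" "t \<ge> 0"
  shows "cosh (U N t) - 1 \<ge> (U N t)^2 / 2" "cosh (U N t) - 1 > 0"
proof -
  show "cosh (U N t) - 1 \<ge> (U N t)^2 / 2" using cosh_ge_quad[of "U N t"] by simp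
  moreover have "(U N t)^2 / 2 > 0" using U_pos[OF assms] by simp
  ultimately show "cosh (U N t) - 1 > 0" by linarith
qed

lemma CS_pos:
  assumes "N > 0" "t \<ge> 0"
  shows "cosh (U N t) - S N > 0" "cosh (U N t) + S N > 0"
  using cosh_U_gt(2)[OF assms] S_abs[of N] by linarith+

lemma ln_pair_deriv:
  assumes du: "(u has_real_derivative u') (at t)"
    and p: "cosh (u t) - K > 0" "cosh (u t) + K > 0"
  shows "((\<lambda>t. ln (cosh (u t) - K) - ln (cosh (u t) + K)) has_real_derivative
           u' * sinh (u t) * (1 / (cosh (u t) - K) - 1 / (cosh (u t) + K))) (at t)"
proof -
  have "((\<lambda>t. ln (cosh (u t) - K) - ln (cosh (u t) + K)) has_real_derivative
          (sinh (u t) * u' - 0) / (cosh (u t) - K) - (sinh (u t) * u' + 0) / (cosh (u t) + K)) (at t)"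
    using p by (auto intro!: derivative_eq_intros du)
  thus ?thesis by (simp add: field_simps)
qed

lemma U_deriv:
  assumes "N > 0" "t > 0"
  shows "((\<lambda>t. U N t) has_real_derivative (pi * c * a / (2 * sqrt (N^2 * a^2 + a * t)))) (at t)"
proof -
  have q: "N^2 * a^2 + a * t > 0" using assms a by (simp add: add_pos_pos)
  show ?thesis unfolding U_def[abs_def]
    using q by (auto intro!: derivative_eq_intros simp: field_simps)
qed

lemma ell_deriv:
  assumes "N > 0" "t > 0"
  shows "((\<lambda>t. ell N t) has_real_derivative ell1 N t) (at t)"
  unfolding ell_def[abs_def] ell1_def
  by (rule ln_pair_deriv[OF U_deriv[OF assms] CS_pos]) (use assms in auto)

lemma ell_bound:
  assumes "N > 0" "t \<ge> 0"
  shows "\<bar>ell N t\<bar> \<le> 4 / (U N t)^2"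
proof -
  define C where "C = cosh (U N t)"
  have C1: "C - 1 \<ge> (U N t)^2/2" "C - 1 > 0" using cosh_U_gt[OF assms] by (auto simp: C_def)
  have x: "C - S N > 0" and y: "C + S N > 0" using CS_pos[OF assms] by (auto simp: C_def)
  have Sa: "\<bar>S N\<bar> \<le> 1" by (rule S_abs)
  have 1: "ln (C - S N) - ln (C + S N) \<le> 2 / (C - 1)"
  proof -
    have "ln (C - S N) - ln (C + S N) = ln ((C - S N)/(C + S N))" using x y by (simp add: ln_div)
    also have "\<dots> \<le> (C - S N)/(C + S N) - 1" using x y by (intro ln_le_minus_one) auto
    also have "\<dots> = -2 * S N / (C + S N)" using y by (simp add: field_simps)
    also have "\<dots> \<le> 2 / (C + S N)" using Sa y by (intro divide_right_mono) auto
    also have "\<dots> \<le> 2 / (C - 1)" using Sa C1 by (intro divide_left_mono) auto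
    finally show ?thesis .
  qed
  have 2: "ln (C + S N) - ln (C - S N) \<le> 2 / (C - 1)"
  proof -
    have "ln (C + S N) - ln (C - S N) = ln ((C + S N)/(C - S N))" using x y by (simp add: ln_div)
    also have "\<dots> \<le> (C + S N)/(C - S N) - 1" using x y by (intro ln_le_minus_one) auto
    also have "\<dots> = 2 * S N / (C - S N)" using x by (simp add: field_simps)
    also have "\<dots> \<le> 2 / (C - S N)" using Sa x by (intro divide_right_mono) auto
    also have "\<dots> \<le> 2 / (C - 1)" using Sa C1 by (intro divide_left_mono) auto
    finally show ?thesis .
  qed
  have "2 / (C - 1) \<le> 2 / ((U N t)^2/2)"
    using C1 U_pos[OF assms] by (intro divide_left_mono) auto
  also have "\<dots> = 4 / (U N t)^2" by simp
  finally show ?thesis using 1 2 unfolding ell_def C_def[symmetric] by linarith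
qed

lemma ell1_bound:
  assumes "N > 0" "t \<ge> 0"
  shows "\<bar>ell1 N t\<bar> \<le> 1 / (a * N^2)"
proof -
  define u where "u = U N t"
  define C where "C = cosh u"
  have u: "u > 0" using U_pos[OF assms] by (simp add: u_def)
  have sq: "sqrt (N^2 * a^2 + a * t) = u / (pi * c)" using c by (simp add: u_def U_def)
  have x: "C - S N > 0" and y: "C + S N > 0" using CS_pos[OF assms] by (auto simp: C_def u_def)
  have sh: "sinh u > 0" using sinh_ge_self[of u] u by simp
  have Sa: "\<bar>S N\<bar> \<le> 1" by (rule S_abs)
  have CC: "C^2 = (sinh u)^2 + 1" unfolding C_def by (simp add: cosh_square_eq)
  have e: "ell1 N t = (pi^2 * c^2 * a / (2 * u)) * sinh u * (2 * S N / (C^2 - (S N)^2))"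
    unfolding ell1_def sq u_def[symmetric] C_def[symmetric]
    using x y u c by (simp add: field_simps power2_eq_square)
  have den: "(sinh u)^2 \<le> C^2 - (S N)^2"
  proof -
    have "(S N)^2 \<le> 1" using Sa by (simp add: abs_square_le_1)
    thus ?thesis using CC by simp
  qed
  have "\<bar>2 * S N / (C^2 - (S N)^2)\<bar> \<le> 2 / (sinh u)^2"
  proof -
    have dp: "C^2 - (S N)^2 > 0" using den sh
      by (smt (verit) zero_less_power)
    have "\<bar>2 * S N / (C^2 - (S N)^2)\<bar> = 2 * \<bar>S N\<bar> / (C^2 - (S N)^2)"
      using dp by (simp add: abs_mult abs_divide)
    also have "\<dots> \<le> 2 / (C^2 - (S N)^2)"
      using Sa dp by (intro divide_right_mono) auto
    also have "\<dots> \<le> 2 / (sinh u)^2" using den sh dp by (intro divide_left_mono) auto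
    finally show ?thesis .
  qed
  moreover have "\<bar>ell1 N t\<bar> = (pi^2 * c^2 * a / (2 * u)) * sinh u * \<bar>2 * S N / (C^2 - (S N)^2)\<bar>"
    unfolding e using u sh a by (simp add: abs_mult)
  moreover have "(pi^2 * c^2 * a / (2 * u)) * sinh u \<ge> 0" using u sh a by simp
  ultimately have "\<bar>ell1 N t\<bar> \<le> (pi^2 * c^2 * a / (2 * u)) * sinh u * (2 / (sinh u)^2)"
    by (metis mult_left_mono)
  also have "\<dots> = pi^2 * c^2 * a / (u * sinh u)"
    using sh u by (simp add: field_simps power2_eq_square)
  also have "\<dots> \<le> pi^2 * c^2 * a / (u * u)"
    using sinh_ge_self[of u] u a c by (intro divide_left_mono mult_left_mono) auto
  also have "\<dots> \<le> pi^2 * c^2 * a / ((pi * c * a * N) * (pi * c * a * N))"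
    using U_lower[OF assms] u a c assms by (intro divide_left_mono mult_mono) (auto simp: u_def)
  also have "\<dots> = 1 / (a * N^2)"
    using a c by (simp add: field_simps power2_eq_square)
  finally show ?thesis .
qed

end



context L begin

definition g :: "real \<Rightarrow> real \<Rightarrow> nat \<Rightarrow> real" where
  "g t N m = (-1)^m * (1 / PP (-1) t N (hv m) - 1 / PP 1 t N (hv m))"

lemma sigma_abs: "\<bar>(-1::real)\<bar> = 1" "\<bar>(1::real)\<bar> = 1" by simp_all

lemma g_bound:
  assumes "t \<ge> 0" "N > 0"
  shows "\<bar>g t N m\<bar> \<le> 2 * (a/kap) * (1/(hv m)^2)"
proof -
  have p1: "PP (-1) t N (hv m) > 0" "PP 1 t N (hv m) > 0"
    using PP_pos[OF _ assms hv_pos] by auto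
  have b1: "1 / PP (-1) t N (hv m) \<le> (a/kap) * (1/(hv m)^2)"
       "1 / PP 1 t N (hv m) \<le> (a/kap) * (1/(hv m)^2)"
    using inv_PP_bound[OF _ assms hv_pos] by auto
  have "\<bar>g t N m\<bar> = \<bar>1 / PP (-1) t N (hv m) - 1 / PP 1 t N (hv m)\<bar>"
    by (simp add: g_def abs_mult)
  also have "\<dots> \<le> 1 / PP (-1) t N (hv m) + 1 / PP 1 t N (hv m)"
  proof -
    have "1 / PP (-1) t N (hv m) > 0" "1 / PP 1 t N (hv m) > 0" using p1 by simp_all
    thus ?thesis by (auto simp: abs_if)
  qed
  also have "\<dots> \<le> 2 * (a/kap) * (1/(hv m)^2)" using b1 by simp
  finally show ?thesis .
qed

lemma g_summable:
  assumes "t \<ge> 0" "N > 0"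
  shows "summable (\<lambda>m. g t N m)"
  by (rule summable_comparison_test'[OF summable_mult[OF summable_hv2, of "2 * (a/kap)"]])
     (use g_bound[OF assms] in \<open>auto simp: mult.commute\<close>)

lemma term_eq:
  assumes t: "t \<ge> 0" and N: "N > 0" and sg: "\<bar>\<sigma>\<bar> = 1" and M: "M > 0"
    and v: "v^2 = pi^2 * (M + \<sigma> * N * a * s)^2"
  shows "(pi * c * a / (2 * sqrt (N^2 * a^2 + a * t))) * (2 * U N t / (v^2 + (U N t)^2))
           = c^2 / PP \<sigma> t N M"
proof -
  have q: "N^2 * a^2 + a * t > 0" using a N t by (simp add: add_pos_nonneg)
  have sq: "sqrt (N^2 * a^2 + a * t) > 0" using q by simp
  have s2: "\<sigma>^2 = 1" using sg by (simp add: abs_square_eq_1)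
  have "v^2 + (U N t)^2 = pi^2 * a * PP \<sigma> t N M"
    unfolding v U_sq[OF t] PP_def
  proof -
    have "pi\<^sup>2 * (M + \<sigma> * N * a * s)\<^sup>2 + pi\<^sup>2 * c\<^sup>2 * (N\<^sup>2 * a\<^sup>2 + a * t)
        = pi^2 * (M^2 + 2*\<sigma>*N*M*a * s + N^2*a^2 * (\<sigma>^2 * s^2 + c^2) + c^2*a*t)"
      by (simp add: algebra_simps power2_eq_square)
    also have "\<sigma>^2 * s^2 + c^2 = 1" using s2 sc by simp
    also have "pi^2 * (M^2 + 2*\<sigma>*N*M*a * s + N^2*a^2 * 1 + c^2*a*t)
        = pi\<^sup>2 * a * (N\<^sup>2 * a + 2 * \<sigma> * N * M * s + M\<^sup>2 / a + c\<^sup>2 * t)"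
      using a by (simp add: field_simps power2_eq_square)
    finally show "pi\<^sup>2 * (M + \<sigma> * N * a * s)\<^sup>2 + pi\<^sup>2 * c\<^sup>2 * (N\<^sup>2 * a\<^sup>2 + a * t)
        = pi\<^sup>2 * a * (N\<^sup>2 * a + 2 * \<sigma> * N * M * s + M\<^sup>2 / a + c\<^sup>2 * t)" .
  qed
  moreover have "U N t = pi * c * sqrt (N^2 * a^2 + a * t)" by (simp add: U_def)
  moreover have "PP \<sigma> t N M > 0" using PP_pos[OF sg t N M] .
  moreover have "\<sigma> * \<sigma> = 1" using s2 by (simp add: power2_eq_square)
  ultimately show ?thesis using sq a c by (simp add: field_simps power2_eq_square)
qed

lemma ell1_sums:
  assumes t: "t \<ge> 0" and N: "N > 0"
  shows "(\<lambda>m. c^2 * g t N m) sums ell1 N t"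
proof -
  define u where "u = U N t"
  define K where "K = pi * c * a / (2 * sqrt (N^2 * a^2 + a * t))"
  have u: "u > 0" using U_pos[OF N t] by (simp add: u_def)
  define w1 where "w1 = pi/2 - pi * N * a * s"
  define w2 where "w2 = pi/2 + pi * N * a * s"
  have cw1: "cos w1 = S N" by (simp add: w1_def S_def cos_diff)
  have cw2: "cos w2 = - S N" by (simp add: w2_def S_def cos_add)
  have hv2: "hv (2*k) = 2 * real k + 1/2" "hv (2*k+1) = 2 * real k + 3/2" for k
    by (simp_all add: hv_def)
  have e1: "K * (2*u/((w1 + 2*pi*real k)^2 + u^2) + 2*u/((2*pi*(real k+1) - w1)^2 + u^2))
          = c^2 / PP (-1) t N (hv (2*k)) + c^2 / PP 1 t N (hv (2*k+1))" for k
  proof -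
    have "K * (2*u/((w1 + 2*pi*real k)^2 + u^2)) = c^2 / PP (-1) t N (hv (2*k))"
      unfolding K_def u_def
      by (rule term_eq[OF t N _ hv_pos]) (simp_all add: hv_def w1_def power_mult_distrib[symmetric] algebra_simps)
    moreover have "K * (2*u/((2*pi*(real k+1) - w1)^2 + u^2)) = c^2 / PP 1 t N (hv (2*k+1))"
      unfolding K_def u_def
      by (rule term_eq[OF t N _ hv_pos]) (simp_all add: hv_def w1_def power_mult_distrib[symmetric] algebra_simps)
    ultimately show ?thesis by (simp add: distrib_left)
  qed
  have e2: "K * (2*u/((w2 + 2*pi*real k)^2 + u^2) + 2*u/((2*pi*(real k+1) - w2)^2 + u^2))
          = c^2 / PP 1 t N (hv (2*k)) + c^2 / PP (-1) t N (hv (2*k+1))" for k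
  proof -
    have "K * (2*u/((w2 + 2*pi*real k)^2 + u^2)) = c^2 / PP 1 t N (hv (2*k))"
      unfolding K_def u_def
      by (rule term_eq[OF t N _ hv_pos]) (simp_all add: hv_def w2_def power_mult_distrib[symmetric] algebra_simps)
    moreover have "K * (2*u/((2*pi*(real k+1) - w2)^2 + u^2)) = c^2 / PP (-1) t N (hv (2*k+1))"
      unfolding K_def u_def
      by (rule term_eq[OF t N _ hv_pos]) (simp_all add: hv_def w2_def power_mult_distrib[symmetric] algebra_simps)
    ultimately show ?thesis by (simp add: distrib_left)
  qed
  have s1: "(\<lambda>k. c^2 / PP (-1) t N (hv (2*k)) + c^2 / PP 1 t N (hv (2*k+1))) sums (K * (sinh u / (cosh u - S N)))"
    using sums_mult[OF pf_real[OF u, of w1], of K] unfolding e1 cw1 .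
  have s2: "(\<lambda>k. c^2 / PP 1 t N (hv (2*k)) + c^2 / PP (-1) t N (hv (2*k+1))) sums (K * (sinh u / (cosh u + S N)))"
    using sums_mult[OF pf_real[OF u, of w2], of K] unfolding e2 cw2 by simp
  have s3: "(\<lambda>k. sum (\<lambda>m. c^2 * g t N m) {k * 2..<k * 2 + 2}) sums ell1 N t"
  proof -
    have "(\<lambda>k. (c^2 / PP (-1) t N (hv (2*k)) + c^2 / PP 1 t N (hv (2*k+1))) -
              (c^2 / PP 1 t N (hv (2*k)) + c^2 / PP (-1) t N (hv (2*k+1))))
          sums (K * (sinh u / (cosh u - S N)) - K * (sinh u / (cosh u + S N)))"
      by (rule sums_diff[OF s1 s2])
    moreover have "K * (sinh u / (cosh u - S N)) - K * (sinh u / (cosh u + S N)) = ell1 N t"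
    proof -
      have gen: "\<And>k x y z::real. k * (z / x) - k * (z / y) = k * z * (1/x - 1/y)"
        by (simp add: divide_inverse algebra_simps)
      show ?thesis unfolding gen unfolding ell1_def K_def u_def by (rule refl)
    qed
    moreover have "sum (\<lambda>m. c^2 * g t N m) {k * 2..<k * 2 + 2} =
        (c^2 / PP (-1) t N (hv (2*k)) + c^2 / PP 1 t N (hv (2*k+1))) -
              (c^2 / PP 1 t N (hv (2*k)) + c^2 / PP (-1) t N (hv (2*k+1)))" for k
    proof -
      have "{k * 2..<k * 2 + 2} = {2*k, 2*k+1}" by auto
      thus ?thesis by (simp add: g_def algebra_simps)
    qed
    ultimately show ?thesis by simp
  qed
  have "(\<lambda>m. c^2 * g t N m) sums (suminf (\<lambda>m. c^2 * g t N m))"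
    using summable_mult[OF g_summable[OF t N]] by (simp add: summable_sums)
  from sums_group[OF this, of 2] have "(\<lambda>k. sum (\<lambda>m. c^2 * g t N m) {k * 2..<k * 2 + 2}) sums (suminf (\<lambda>m. c^2 * g t N m))"
    by simp
  with s3 have "ell1 N t = suminf (\<lambda>m. c^2 * g t N m)" by (rule sums_unique2)
  thus ?thesis using summable_mult[OF g_summable[OF t N]] by (simp add: summable_sums)
qed

end



context L begin

definition h :: "real \<Rightarrow> real \<Rightarrow> nat \<Rightarrow> real" where
  "h t N m = (-1)^m * (1 / (PP 1 t N (hv m))^2 - 1 / (PP (-1) t N (hv m))^2)"

definition ell2 :: "real \<Rightarrow> real \<Rightarrow> real" where
  "ell2 N t = (\<Sum>m. c^4 * h t N m)"

definition B2 where "B2 = c^4 * (2 / (4 * kap^2))"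

lemma h_bound:
  assumes "t \<ge> 0" "N > 0"
  shows "\<bar>c^4 * h t N m\<bar> \<le> B2 * (1/N^2) * (1/(hv m)^2)"
proof -
  have b1: "1 / (PP 1 t N (hv m))^2 \<le> (1/(4*kap^2)) * (1/N^2) * (1/(hv m)^2)"
    using inv_PP2_bound[OF _ assms hv_pos] by simp
  have b2: "1 / (PP (-1) t N (hv m))^2 \<le> (1/(4*kap^2)) * (1/N^2) * (1/(hv m)^2)"
    using inv_PP2_bound[OF _ assms hv_pos] by simp
  have p: "1 / (PP \<sigma> t N (hv m))^2 \<ge> 0" for \<sigma> by simp
  have "\<bar>h t N m\<bar> = \<bar>1 / (PP 1 t N (hv m))^2 - 1 / (PP (-1) t N (hv m))^2\<bar>"
    by (simp add: h_def abs_mult)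
  also have "\<dots> \<le> 1 / (PP 1 t N (hv m))^2 + 1 / (PP (-1) t N (hv m))^2"
    using p[of 1] p[of "-1"] by (auto simp: abs_if)
  also have "\<dots> \<le> 2 * ((1/(4*kap^2)) * (1/N^2) * (1/(hv m)^2))"
    using b1 b2 by linarith
  finally have "\<bar>h t N m\<bar> \<le> 2 * ((1/(4*kap^2)) * (1/N^2) * (1/(hv m)^2))" .
  hence "c^4 * \<bar>h t N m\<bar> \<le> c^4 * (2 * ((1/(4*kap^2)) * (1/N^2) * (1/(hv m)^2)))"
    by (intro mult_left_mono) auto
  thus ?thesis by (simp add: abs_mult B2_def mult_ac)
qed

lemma PP_deriv:
  assumes "PP \<sigma> t N M \<noteq> 0"
  shows "((\<lambda>t. 1 / PP \<sigma> t N M) has_real_derivative - (c^2) / (PP \<sigma> t N M)^2) (at t)"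
proof -
  define A where "A = N^2*a + 2*\<sigma>*N*M * s + M^2/a"
  have e: "PP \<sigma> t' N M = A + c^2 * t'" for t' by (simp add: PP_def A_def)
  have "((\<lambda>t. 1 / (A + c^2 * t)) has_real_derivative - (c^2) / (A + c^2 * t)^2) (at t)"
    using assms unfolding e
    by (auto intro!: derivative_eq_intros simp: power2_eq_square)
  thus ?thesis unfolding e .
qed

lemma g_deriv:
  assumes "t > 0" "N > 0"
  shows "((\<lambda>t. c^2 * g t N m) has_real_derivative c^4 * h t N m) (at t)"
proof -
  have p1: "PP 1 t N (hv m) \<noteq> 0" "PP (-1) t N (hv m) \<noteq> 0"
    using PP_pos[OF _ _ assms(2) hv_pos] assms(1) by (auto simp: less_imp_neq[symmetric])
  have "((\<lambda>t. c^2 * ((-1)^m * (1 / PP (-1) t N (hv m) - 1 / PP 1 t N (hv m)))) has_real_derivative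
       c^2 * ((-1)^m * (- (c^2) / (PP (-1) t N (hv m))^2 - (- (c^2) / (PP 1 t N (hv m))^2)))) (at t)"
    by (intro DERIV_cmult DERIV_diff PP_deriv p1)
  thus ?thesis unfolding g_def h_def by (simp add: algebra_simps power4_eq_xxxx power2_eq_square)
qed

lemma ell1_deriv:
  assumes t: "t > 0" and N: "N > 0"
  shows "((\<lambda>t. ell1 N t) has_real_derivative ell2 N t) (at t)"
proof -
  have sm: "summable (\<lambda>m. B2 * (1/N^2) * (1/(hv m)^2))"
    by (intro summable_mult summable_hv2)
  have d: "((\<lambda>t. \<Sum>m. c^2 * g t N m) has_field_derivative (\<Sum>m. c^4 * h t N m)) (at t)"
  proof (rule has_field_derivative_series'(2)[of "{0<..}"])
    show "convex {0::real<..}" by simp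
    show "((\<lambda>t. c^2 * g t N m) has_field_derivative c^4 * h x N m) (at x within {0<..})"
      if "x \<in> {0<..}" for m x using g_deriv[of x N m] that N by (auto intro: has_field_derivative_at_within)
    show "uniformly_convergent_on {0<..} (\<lambda>n x. \<Sum>i<n. c^4 * h x N i)"
      by (rule Weierstrass_m_test'[OF _ sm]) (use h_bound N in auto)
    show "(1::real) \<in> {0<..}" by simp
    show "summable (\<lambda>m. c^2 * g 1 N m)" using g_summable[of 1 N] N by (intro summable_mult) auto
    show "t \<in> interior {0<..}" using t by (subst interior_open) auto
  qed
  show ?thesis unfolding ell2_def
  proof (rule has_field_derivative_transform_within_open[OF d, of "{0<..}"])
    show "(\<Sum>m. c^2 * g x N m) = ell1 N x" if "x \<in> {0<..}" for x
      using ell1_sums[of x N] that N by (simp add: sums_iff)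
  qed (use t in auto)
qed

lemma ell2_bound:
  assumes t: "t \<ge> 0" and N: "N > 0"
  shows "\<bar>ell2 N t\<bar> \<le> B2 * (\<Sum>m. 1/(hv m)^2) * (1/N^2)"
proof -
  have sm: "summable (\<lambda>m. B2 * (1/N^2) * (1/(hv m)^2))"
    by (intro summable_mult summable_hv2)
  have "\<bar>ell2 N t\<bar> \<le> (\<Sum>m. \<bar>c^4 * h t N m\<bar>)"
    unfolding ell2_def
    by (rule summable_rabs[OF summable_comparison_test'[OF sm]]) (use h_bound[OF t N] in auto)
  also have "\<dots> \<le> (\<Sum>m. B2 * (1/N^2) * (1/(hv m)^2))"
    by (rule suminf_le[OF _ summable_comparison_test'[OF sm] sm]) (use h_bound[OF t N] in auto)
  also have "\<dots> = B2 * (1/N^2) * (\<Sum>m. 1/(hv m)^2)"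
    by (rule suminf_mult[OF summable_hv2])
  finally show ?thesis by (simp add: mult_ac)
qed

end



context L begin

definition Phi where "Phi t = (\<Sum>n. (-1)^n * ell (hv n) t)"
definition Phi1 where "Phi1 t = (\<Sum>n. (-1)^n * ell1 (hv n) t)"
definition Phi2 where "Phi2 t = (\<Sum>n. (-1)^n * ell2 (hv n) t)"

lemma ell_bound2:
  assumes "t \<ge> 0" "N > 0"
  shows "\<bar>ell N t\<bar> \<le> (4/(pi*c*a)^2) * (1/N^2)"
proof -
  have p: "pi*c*a*N > 0" using a c assms by simp
  have "(pi*c*a*N)^2 \<le> (U N t)^2" using U_lower[OF assms(2,1)] p by (intro power_mono) auto
  hence "4 / (U N t)^2 \<le> 4 / (pi*c*a*N)^2" using p by (intro frac_le) auto
  also have "\<dots> = (4/(pi*c*a)^2) * (1/N^2)" by (simp add: power_mult_distrib)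
  finally show ?thesis using ell_bound[OF assms(2,1)] by linarith
qed

lemma Phi_deriv:
  assumes t: "t > 0"
  shows "(Phi has_real_derivative Phi1 t) (at t)"
  unfolding Phi_def[abs_def] Phi1_def
proof (rule has_field_derivative_series'(2)[of "{0<..}"])
  show "convex {0::real<..}" by simp
  show "((\<lambda>t. (-1)^n * ell (hv n) t) has_field_derivative (-1)^n * ell1 (hv n) x) (at x within {0<..})"
    if "x \<in> {0<..}" for n x
    by (rule has_field_derivative_at_within, rule DERIV_cmult, rule ell_deriv) (use that hv_pos[of n] in auto)
  show "uniformly_convergent_on {0<..} (\<lambda>n x. \<Sum>i<n. (-1)^i * ell1 (hv i) x)"
  proof (rule Weierstrass_m_test'[OF _ summable_mult[OF summable_hv2, of "1/a"]])
    fix n and x :: real assume "x \<in> {0<..}"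
    thus "norm ((-1)^n * ell1 (hv n) x) \<le> 1/a * (1/(hv n)^2)"
      using ell1_bound[of "hv n" x] hv_pos[of n] by (simp add: abs_mult)
  qed
  show "(1::real) \<in> {0<..}" by simp
  show "summable (\<lambda>n. (-1)^n * ell (hv n) 1)"
  proof (rule summable_comparison_test'[OF summable_mult[OF summable_hv2, of "4/(pi*c*a)^2"]])
    fix n show "norm ((-1)^n * ell (hv n) 1) \<le> 4/(pi*c*a)^2 * (1/(hv n)^2)"
      using ell_bound2[of 1 "hv n"] hv_pos[of n] by (simp add: abs_mult)
  qed
  show "t \<in> interior {0<..}" using t by (subst interior_open) auto
qed

lemma Phi1_deriv:
  assumes t: "t > 0"
  shows "(Phi1 has_real_derivative Phi2 t) (at t)"
  unfolding Phi1_def[abs_def] Phi2_def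
proof (rule has_field_derivative_series'(2)[of "{0<..}"])
  show "convex {0::real<..}" by simp
  show "((\<lambda>t. (-1)^n * ell1 (hv n) t) has_field_derivative (-1)^n * ell2 (hv n) x) (at x within {0<..})"
    if "x \<in> {0<..}" for n x
    by (rule has_field_derivative_at_within, rule DERIV_cmult, rule ell1_deriv) (use that hv_pos[of n] in auto)
  show "uniformly_convergent_on {0<..} (\<lambda>n x. \<Sum>i<n. (-1)^i * ell2 (hv i) x)"
  proof (rule Weierstrass_m_test'[OF _ summable_mult[OF summable_hv2, of "B2 * (\<Sum>m. 1/(hv m)^2)"]])
    fix n and x :: real assume "x \<in> {0<..}"
    thus "norm ((-1)^n * ell2 (hv n) x) \<le> B2 * (\<Sum>m. 1/(hv m)^2) * (1/(hv n)^2)"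
      using ell2_bound[of x "hv n"] hv_pos[of n] by (simp add: abs_mult)
  qed
  show "(1::real) \<in> {0<..}" by simp
  show "summable (\<lambda>n. (-1)^n * ell1 (hv n) 1)"
  proof (rule summable_comparison_test'[OF summable_mult[OF summable_hv2, of "1/a"]])
    fix n show "norm ((-1)^n * ell1 (hv n) 1) \<le> 1/a * (1/(hv n)^2)"
      using ell1_bound[of "hv n" 1] hv_pos[of n] by (simp add: abs_mult)
  qed
  show "t \<in> interior {0<..}" using t by (subst interior_open) auto
qed

end



lemma infsum_eq_suminf_real:
  fixes f :: "nat \<Rightarrow> real"
  assumes "summable (\<lambda>n. norm (f n))"
  shows "infsum f UNIV = suminf f"
  using norm_summable_imp_has_sum[OF assms summable_sums[OF summable_norm_cancel[OF assms]]]
  by (rule infsumI)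

lemma suminf_swap_bound:
  fixes f :: "nat \<Rightarrow> nat \<Rightarrow> real"
  assumes bd: "\<And>n m. \<bar>f n m\<bar> \<le> b n * b' m" and sb: "summable b" and sb': "summable b'"
    and nn: "\<And>n. b n \<ge> 0" and nn': "\<And>m. b' m \<ge> 0"
  shows "(\<Sum>n. \<Sum>m. f n m) = (\<Sum>m. \<Sum>n. f n m)"
proof -
  have gsum: "(\<lambda>x. norm ((\<lambda>(n,m). b n * b' m) x)) summable_on (UNIV \<times> UNIV)"
  proof -
    have "(\<lambda>x. norm ((\<lambda>(n,m). b n * b' m) x)) summable_on Sigma UNIV (\<lambda>_. UNIV)"
    proof (subst Infinite_Sum.abs_summable_on_Sigma_iff, intro conjI ballI)
      fix n :: nat
      show "(\<lambda>m. norm ((\<lambda>(n,m). b n * b' m) (n, m))) summable_on UNIV"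
        using nn nn' by (intro norm_summable_imp_summable_on) (auto intro!: summable_mult sb')
      have "infsum (\<lambda>m. norm ((\<lambda>(n,m). b n * b' m) (n, m))) UNIV = b n * suminf b'"
      proof -
        have "infsum (\<lambda>m. norm ((\<lambda>(n,m). b n * b' m) (n, m))) UNIV = infsum (\<lambda>m. b n * b' m) UNIV"
          using nn nn' by (intro infsum_cong) auto
        also have "\<dots> = suminf (\<lambda>m. b n * b' m)"
          using nn nn' by (intro infsum_eq_suminf_real) (auto intro!: summable_mult sb')
        also have "\<dots> = b n * suminf b'" by (rule suminf_mult[OF sb'])
        finally show ?thesis .
      qed
      note this
    next
      have e: "(\<lambda>n. infsum (\<lambda>m. norm ((\<lambda>(n,m). b n * b' m) (n, m))) UNIV) = (\<lambda>n. b n * suminf b')"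
      proof
        fix n
        have "infsum (\<lambda>m. norm ((\<lambda>(n,m). b n * b' m) (n, m))) UNIV = infsum (\<lambda>m. b n * b' m) UNIV"
          using nn nn' by (intro infsum_cong) auto
        also have "\<dots> = suminf (\<lambda>m. b n * b' m)"
          using nn nn' by (intro infsum_eq_suminf_real) (auto intro!: summable_mult sb')
        also have "\<dots> = b n * suminf b'" by (rule suminf_mult[OF sb'])
        finally show "infsum (\<lambda>m. norm ((\<lambda>(n,m). b n * b' m) (n, m))) UNIV = b n * suminf b'" .
      qed
      have "suminf b' \<ge> 0" using nn' sb' by (intro suminf_nonneg) auto
      hence "summable (\<lambda>n. norm (norm (b n * suminf b')))" using nn
        by (simp add: summable_mult2[OF sb])
      hence "(\<lambda>n. norm (b n * suminf b')) summable_on UNIV"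
        by (rule norm_summable_imp_summable_on)
      show "(\<lambda>x. norm ((\<lambda>n. infsum (\<lambda>m. norm ((\<lambda>(n,m). b n * b' m) (n, m))) UNIV) x)) summable_on UNIV"
      proof -
        have e'': "infsum (\<lambda>m. \<bar>b n * b' m\<bar>) UNIV = b n * suminf b'" for n
          using fun_cong[OF e, of n] by simp
        show ?thesis using \<open>(\<lambda>n. norm (b n * suminf b')) summable_on UNIV\<close> by (simp add: e'')
      qed
    qed
    thus ?thesis by simp
  qed
  have fs: "(\<lambda>(n,m). f n m) summable_on (UNIV \<times> UNIV)"
  proof (rule Infinite_Sum.abs_summable_summable, rule Infinite_Sum.abs_summable_on_comparison_test[OF gsum])
    fix x :: "nat \<times> nat"
    obtain n m where x: "x = (n,m)" by (cases x)
    show "norm ((\<lambda>(n,m). f n m) x) \<le> norm ((\<lambda>(n,m). b n * b' m) x)"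
      using bd[of n m] nn[of n] nn'[of m] by (simp add: x)
  qed
  have sw: "infsum (\<lambda>n. infsum (\<lambda>m. f n m) UNIV) UNIV = infsum (\<lambda>m. infsum (\<lambda>n. f n m) UNIV) UNIV"
    by (rule infsum_swap_banach[OF fs])
  have in1: "infsum (\<lambda>m. f n m) UNIV = (\<Sum>m. f n m)" for n
    by (rule infsum_eq_suminf_real, rule summable_comparison_test'[of "\<lambda>m. b n * b' m"])
       (use bd nn nn' sb' in \<open>auto intro!: summable_mult\<close>)
  have in2: "infsum (\<lambda>n. f n m) UNIV = (\<Sum>n. f n m)" for m
    by (rule infsum_eq_suminf_real, rule summable_comparison_test'[of "\<lambda>n. b n * b' m"])
       (use bd nn nn' sb in \<open>auto intro!: summable_mult2\<close>)
  have o1: "infsum (\<lambda>n. \<Sum>m. f n m) UNIV = (\<Sum>n. \<Sum>m. f n m)"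
  proof (rule infsum_eq_suminf_real, rule summable_comparison_test'[of "\<lambda>n. b n * suminf b'"])
    show "summable (\<lambda>n. b n * suminf b')" by (rule summable_mult2[OF sb])
    fix n
    have s1: "summable (\<lambda>m. \<bar>f n m\<bar>)"
      by (rule summable_comparison_test'[of "\<lambda>m. b n * b' m"]) (use bd nn nn' sb' in \<open>auto intro!: summable_mult\<close>)
    have "norm (norm (\<Sum>m. f n m)) \<le> (\<Sum>m. \<bar>f n m\<bar>)"
      using summable_rabs[OF s1] by simp
    also have "\<dots> \<le> (\<Sum>m. b n * b' m)"
      by (rule suminf_le[OF _ s1]) (use bd sb' in \<open>auto intro!: summable_mult\<close>)
    also have "\<dots> = b n * suminf b'" by (rule suminf_mult[OF sb'])
    finally show "norm (norm (\<Sum>m. f n m)) \<le> b n * suminf b'" .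
  qed
  have o2: "infsum (\<lambda>m. \<Sum>n. f n m) UNIV = (\<Sum>m. \<Sum>n. f n m)"
  proof (rule infsum_eq_suminf_real, rule summable_comparison_test'[of "\<lambda>m. suminf b * b' m"])
    show "summable (\<lambda>m. suminf b * b' m)" by (rule summable_mult[OF sb'])
    fix m
    have s1: "summable (\<lambda>n. \<bar>f n m\<bar>)"
      by (rule summable_comparison_test'[of "\<lambda>n. b n * b' m"]) (use bd nn nn' sb in \<open>auto intro!: summable_mult2\<close>)
    have "norm (norm (\<Sum>n. f n m)) \<le> (\<Sum>n. \<bar>f n m\<bar>)"
      using summable_rabs[OF s1] by simp
    also have "\<dots> \<le> (\<Sum>n. b n * b' m)"
      by (rule suminf_le[OF _ s1]) (use bd sb in \<open>auto intro!: summable_mult2\<close>)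
    also have "\<dots> = suminf b * b' m" by (rule suminf_mult2[OF sb, symmetric])
    finally show "norm (norm (\<Sum>n. f n m)) \<le> suminf b * b' m" .
  qed
  show ?thesis using sw unfolding in1 in2 o1 o2 .
qed




lemma (in L) h_summable:
  assumes "t \<ge> 0" "N > 0"
  shows "summable (\<lambda>m. c^4 * h t N m)"
  by (rule summable_comparison_test'[OF summable_mult[OF summable_hv2, of "B2 * (1/N^2)"]])
     (use h_bound[OF assms] in \<open>auto simp: mult.assoc\<close>)

lemma (in L) B2_nonneg: "B2 \<ge> 0" by (simp add: B2_def)

lemma (in L) Phi2_double:
  assumes "t \<ge> 0"
  shows "Phi2 t = (\<Sum>n. \<Sum>m. (-1)^n * (c^4 * h t (hv n) m))"
  unfolding Phi2_def ell2_def
  by (intro suminf_cong suminf_mult[symmetric] h_summable[OF assms hv_pos])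

lemma Phi2_sym:
  assumes a: "a > 0" and c: "c > 0" and sc: "s^2 + c^2 = 1" and t: "t \<ge> 0"
  shows "L.Phi2 a s c t = L.Phi2 (1/a) s c t"
proof -
  interpret A: L a s c using assms by unfold_locales
  interpret B: L "1/a" s c using assms by unfold_locales auto
  define F where "F n m = (-1)^n * (c^4 * A.h t (hv n) m)" for n m
  have PPsym: "B.PP \<sigma> t (hv n) (hv m) = A.PP \<sigma> t (hv m) (hv n)" for \<sigma> n m
    by (simp add: A.PP_def B.PP_def algebra_simps)
  have Fsym: "(-1)^n * (c^4 * B.h t (hv n) m) = F m n" for n m
    by (simp add: F_def A.h_def B.h_def PPsym algebra_simps)
  have kk: "B.kap = A.kap" by (simp add: A.kap_def B.kap_def)
  have "L.Phi2 (1/a) s c t = (\<Sum>n. \<Sum>m. F m n)"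
    using B.Phi2_double[OF t] by (simp add: Fsym)
  also have "\<dots> = (\<Sum>m. \<Sum>n. F m n)"
  proof (rule suminf_swap_bound[of _ "\<lambda>n. 1/(hv n)^2" "\<lambda>m. A.B2 * (1/(hv m)^2)"])
    fix n m
    show "\<bar>F m n\<bar> \<le> 1/(hv n)^2 * (A.B2 * (1/(hv m)^2))"
      using A.h_bound[OF t hv_pos, of m n] by (simp add: F_def abs_mult mult_ac)
  qed (use summable_hv2 A.B2_nonneg summable_mult[OF summable_hv2, of A.B2] in auto)
  also have "\<dots> = L.Phi2 a s c t"
    using A.Phi2_double[OF t] by (simp add: F_def)
  finally show ?thesis ..
qed




context L begin

lemma ell_tendsto:
  assumes N: "N > 0"
  shows "((\<lambda>t. ell N t) \<longlongrightarrow> 0) at_top"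
proof (rule Lim_null_comparison)
  show "eventually (\<lambda>t. norm (ell N t) \<le> 4 / (pi^2 * c^2 * (N^2 * a^2 + a * t))) at_top"
    using eventually_ge_at_top[of "0::real"]
  proof eventually_elim
    case (elim t)
    thus ?case using ell_bound[OF N elim] U_sq[OF elim, of N] by simp
  qed
  have f1: "filterlim (\<lambda>t. a * t) at_top at_top"
    by (rule filterlim_tendsto_pos_mult_at_top[OF tendsto_const a filterlim_ident])
  have f2: "filterlim (\<lambda>t. N^2 * a^2 + a * t) at_top at_top"
    by (rule filterlim_tendsto_add_at_top[OF tendsto_const f1])
  have f3: "filterlim (\<lambda>t. pi^2 * c^2 * (N^2 * a^2 + a * t)) at_top at_top"
    by (rule filterlim_tendsto_pos_mult_at_top[OF tendsto_const _ f2]) (use c in simp)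
  show "((\<lambda>t. 4 / (pi^2 * c^2 * (N^2 * a^2 + a * t))) \<longlongrightarrow> 0) at_top"
    by (rule tendsto_divide_0[OF tendsto_const filterlim_at_top_imp_at_infinity[OF f3]])
qed

lemma Phi_tendsto: "(Phi \<longlongrightarrow> 0) at_top"
proof -
  have "eventually (\<lambda>n. summable (\<lambda>k. norm ((-1)^k * ell (hv k) n))) at_top \<and>
        summable (\<lambda>n. norm (0::real)) \<and>
        ((\<lambda>n. suminf (\<lambda>k. (-1)^k * ell (hv k) n)) \<longlongrightarrow> suminf (\<lambda>k. 0::real)) at_top"
  proof (rule tannerys_theorem[where M = "\<lambda>k. 4/(pi*c*a)^2 * (1/(hv k)^2)"])
    show "((\<lambda>n. (-1)^k * ell (hv k) n) \<longlongrightarrow> 0) at_top" for k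
      using tendsto_mult[OF tendsto_const[of "(-1)^k"] ell_tendsto[OF hv_pos[of k]]] by simp
    have "eventually (\<lambda>x. snd x \<ge> (0::real)) ((at_top::nat filter) \<times>\<^sub>F at_top)"
      using eventually_prodI[OF eventually_True eventually_ge_at_top[of "0::real"]] by simp
    thus "eventually (\<lambda>(k,n). norm ((-1)^k * ell (hv k) n) \<le> 4/(pi*c*a)^2 * (1/(hv k)^2)) (at_top \<times>\<^sub>F at_top)"
    proof (rule eventually_mono)
      fix x :: "nat \<times> real" assume "snd x \<ge> 0"
      thus "(\<lambda>(k,n). norm ((-1)^k * ell (hv k) n) \<le> 4/(pi*c*a)^2 * (1/(hv k)^2)) x"
        using ell_bound2[of "snd x" "hv (fst x)"] hv_pos[of "fst x"]
        by (cases x) (auto simp: abs_mult)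
    qed
    show "summable (\<lambda>k. 4/(pi*c*a)^2 * (1/(hv k)^2))" by (rule summable_mult[OF summable_hv2])
  qed simp
  thus ?thesis unfolding Phi_def[abs_def] by simp
qed

end




lemma exp_powi_sign: "exp (l::real) powi ((-1)^n) = exp ((-1)^n * l)"
proof (cases "even n")
  case True thus ?thesis by simp
next
  case False thus ?thesis by (simp add: exp_minus power_int_minus)
qed

lemma (in L) Phi_summable:
  assumes "t \<ge> 0"
  shows "summable (\<lambda>n. (-1)^n * ell (hv n) t)"
proof (rule summable_comparison_test'[OF summable_mult[OF summable_hv2, of "4/(pi*c*a)^2"]])
  fix n show "norm ((-1)^n * ell (hv n) t) \<le> 4/(pi*c*a)^2 * (1/(hv n)^2)"
    using ell_bound2[OF assms hv_pos[of n]] by (simp add: abs_mult)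
qed

lemma (in L) fprod_eq:
  assumes s: "s = sin \<theta>" and cc: "c = cos \<theta>" and y: "y > 0"
  shows "f_prod \<theta> y a = exp (Phi (y^2))"
proof -
  have t: "y^2 \<ge> 0" by simp
  have "fac \<theta> y a n = exp ((-1)^n * ell (hv n) (y^2))" for n
  proof -
    have CS: "cosh (U (hv n) (y^2)) - S (hv n) > 0" "cosh (U (hv n) (y^2)) + S (hv n) > 0"
      using CS_pos[OF hv_pos t] by auto
    have "fac \<theta> y a n = ((cosh (U (hv n) (y^2)) - S (hv n)) / (cosh (U (hv n) (y^2)) + S (hv n))) powi ((-1)^n)"
      unfolding fac_def Let_def U_def S_def hv_def by (simp add: s cc mult.assoc)
    also have "(cosh (U (hv n) (y^2)) - S (hv n)) / (cosh (U (hv n) (y^2)) + S (hv n)) = exp (ell (hv n) (y^2))"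
      unfolding ell_def using CS by (simp add: exp_diff)
    finally show ?thesis by (simp add: exp_powi_sign)
  qed
  hence "fac \<theta> y a = (\<lambda>n. exp ((-1)^n * ell (hv n) (y^2)))" by (intro ext)
  hence "f_prod \<theta> y a = prodinf (\<lambda>n. exp ((-1)^n * ell (hv n) (y^2)))"
    unfolding f_prod_def by (simp only:)
  also have "\<dots> = exp (Phi (y^2))"
    unfolding Phi_def by (rule prodinf_exp[OF Phi_summable[OF t]])
  finally show ?thesis .
qed

lemma Phi_sym:
  assumes a: "a > 0" and c: "c > 0" and sc: "s^2 + c^2 = 1" and t0: "t0 > 0"
  shows "L.Phi a s c t0 = L.Phi (1/a) s c t0"
proof -
  interpret A: L a s c using assms by unfold_locales
  interpret B: L "1/a" s c using assms by unfold_locales auto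
  define D where "D t = A.Phi t - B.Phi t" for t
  define D1 where "D1 t = A.Phi1 t - B.Phi1 t" for t
  have dD: "(D has_real_derivative D1 t) (at t)" if "t > 0" for t
    unfolding D_def[abs_def] D1_def using A.Phi_deriv[OF that] B.Phi_deriv[OF that]
    by (rule DERIV_diff)
  have dD1: "(D1 has_real_derivative 0) (at t)" if "t > 0" for t
  proof -
    have "(D1 has_real_derivative A.Phi2 t - B.Phi2 t) (at t)"
      unfolding D1_def[abs_def] using A.Phi1_deriv[OF that] B.Phi1_deriv[OF that]
      by (rule DERIV_diff)
    moreover have "A.Phi2 t - B.Phi2 t = 0" using Phi2_sym[OF a c sc, of t] that by simp
    ultimately show ?thesis by simp
  qed
  obtain k where k: "\<And>t. t \<in> {0<..} \<Longrightarrow> D1 t = k"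
    using has_field_derivative_zero_constant[of "{0::real<..}" D1] dD1
    by (metis convex_real_interval(3) greaterThan_iff has_field_derivative_at_within)
  define E where "E t = D t - k * t" for t
  have dE: "(E has_real_derivative 0) (at t within {0<..})" if "t \<in> {0<..}" for t
  proof -
    have "(E has_real_derivative D1 t - k * 1) (at t)"
      unfolding E_def[abs_def] using that by (auto intro!: derivative_eq_intros dD)
    thus ?thesis using k[OF that] by (simp add: has_field_derivative_at_within)
  qed
  obtain b where b: "\<And>t. t \<in> {0<..} \<Longrightarrow> E t = b"
    using has_field_derivative_zero_constant[of "{0::real<..}" E] dE
    by (metis convex_real_interval(3))
  have Dform: "D t = k * t + b" if "t > 0" for t using b[of t] that by (simp add: E_def)
  have D0: "(D \<longlongrightarrow> 0) at_top"
    unfolding D_def[abs_def] using tendsto_diff[OF A.Phi_tendsto B.Phi_tendsto] by simp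
  have ev: "eventually (\<lambda>t. D t = k * t + b) at_top"
    using eventually_gt_at_top[of "0::real"] by eventually_elim (rule Dform)
  have k0: "k = 0"
  proof -
    have "((\<lambda>t. D t / t) \<longlongrightarrow> 0) at_top"
      by (rule tendsto_divide_0[OF D0 filterlim_at_top_imp_at_infinity[OF filterlim_ident]])
    moreover have "eventually (\<lambda>t. D t / t = k + b / t) at_top"
      using eventually_gt_at_top[of "0::real"] by eventually_elim (simp add: Dform field_simps)
    ultimately have "((\<lambda>t. k + b / t) \<longlongrightarrow> 0) at_top"
      by (rule Lim_transform_eventually)
    moreover have "((\<lambda>t. k + b / t) \<longlongrightarrow> k + 0) at_top"
      by (intro tendsto_add tendsto_const tendsto_divide_0[OF tendsto_const]
            filterlim_at_top_imp_at_infinity[OF filterlim_ident])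
    ultimately show ?thesis using tendsto_unique[of "at_top :: real filter"] by force
  qed
  have b0: "b = 0"
  proof -
    have "((\<lambda>t::real. b) \<longlongrightarrow> 0) at_top"
      using Lim_transform_eventually[OF D0 ev] k0 by simp
    thus ?thesis by (simp add: tendsto_const_iff)
  qed
  show ?thesis using Dform[OF t0] k0 b0 by (simp add: D_def)
qed

theorem mainTheorem8:
  fixes \<theta> y \<alpha> :: real
  assumes "- (pi/2) < \<theta>" and "\<theta> < pi/2" and "y > 0" and "\<alpha> > 0"
  shows "f_prod \<theta> y \<alpha> = f_prod \<theta> y (1 / \<alpha>)"
proof -
  have c: "cos \<theta> > 0" using assms(1,2) by (intro cos_gt_zero_pi) auto
  have sc: "(sin \<theta>)^2 + (cos \<theta>)^2 = 1" by simp
  interpret A: L \<alpha> "sin \<theta>" "cos \<theta>" using assms c by unfold_locales auto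
  interpret B: L "1/\<alpha>" "sin \<theta>" "cos \<theta>" using assms c by unfold_locales auto
  have "f_prod \<theta> y \<alpha> = exp (A.Phi (y^2))" by (rule A.fprod_eq[OF refl refl assms(3)])
  also have "A.Phi (y^2) = B.Phi (y^2)" using Phi_sym[OF assms(4) c sc, of "y^2"] assms(3) by simp
  also have "exp (B.Phi (y^2)) = f_prod \<theta> y (1/\<alpha>)" by (rule B.fprod_eq[OF refl refl assms(3), symmetric])
  finally show ?thesis .
qed


end
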